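(* Let $F$ be a distribution function on $\mathbb{R}$ satisfying (A1), with median $\theta = F^{-1}(1/2)$, let $0 \le \varepsilon < 1/2$, let $n \ge 1$, and let $k$ be an integer with $0 \le k$ and $k+1 \le n-k$. For $G \in \mathcal{F}_\varepsilon(F)$ let $X_n = (x_1,\dots,x_n)$ be an i.i.d. sample from $G$ with order statistics $x_{(1)} \le \dots \le x_{(n)}$. Then: (a) $$\inf_{G \in \mathcal{F}_\varepsilon(F)} P_G\big(x_{(k+1)} \le \theta < x_{(n-k)}\big) = 1 - \alpha^*(n,k,\varepsilon).$$ (b) The infimum in (a) is attained by $G = (1-\varepsilon)F + \varepsilon H$ for any distribution $H$ that places all its mass to the left of $\theta$ (i.e. $H((-\infty,\theta]) = 1$) or all its mass to the right of $\theta$ (i.e. $H((\theta,\infty)) = 1$).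
   Context: Assumption (A1): $F$ is a continuous distribution function with a unique median $\theta(F) = F^{-1}(1/2)$. For $0 \le \varepsilon < 1/2$, the contamination neighborhood of $F$ is $\mathcal{F}_\varepsilon(F) = \{G : G = (1-\varepsilon)F + \varepsilon H,\ H \text{ an arbitrary distribution on } \mathbb{R}\}$. For integers $n \ge 1$, $k \ge 0$ and $0 \le \varepsilon < 1/2$, define $\alpha^*(n,k,\varepsilon) = 1 - P(k < Z_n < n-k)$, where $Z_n \sim \mathrm{Binomial}(n,(1-\varepsilon)/2)$. *)

theory Defs
  imports "HOL-Probability.Probability"
begin

definition is_mixture :: "real \<Rightarrow> real measure \<Rightarrow> real measure \<Rightarrow> real measure \<Rightarrow> bool" where
  "is_mixture eps F H G \<longleftrightarrow> real_distribution G \<and>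
     (\<forall>A\<in>sets borel. measure G A = (1 - eps) * measure F A + eps * measure H A)"

definition contam_nbhd :: "real \<Rightarrow> real measure \<Rightarrow> real measure set" where
  "contam_nbhd eps F = {G. \<exists>H. real_distribution H \<and> is_mixture eps F H G}"

text \<open>j-th order statistic (1-indexed) of the sample x 0, ..., x (n-1).\<close>
definition order_stat :: "nat \<Rightarrow> nat \<Rightarrow> (nat \<Rightarrow> real) \<Rightarrow> real" where
  "order_stat n j x = sort (map x [0..<n]) ! (j - 1)"

definition coverage :: "nat \<Rightarrow> nat \<Rightarrow> real \<Rightarrow> real measure \<Rightarrow> real" where
  "coverage n k theta G = measure (PiM {..<n} (\<lambda>_. G))
     {x \<in> space (PiM {..<n} (\<lambda>_. G)). order_stat n (k+1) x \<le> theta \<and> theta < order_stat n (n-k) x}"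

definition alpha_star :: "nat \<Rightarrow> nat \<Rightarrow> real \<Rightarrow> real" where
  "alpha_star n k eps = 1 - measure_pmf.prob (binomial_pmf n ((1 - eps) / 2)) {z. k < z \<and> z < n - k}"

end

theory Submission imports Defs begin
definition Sb :: "nat \<Rightarrow> nat \<Rightarrow> real \<Rightarrow> real" where
  "Sb n k p = (\<Sum>j\<in>{k<..<n-k}. real (n choose j) * p^j * (1-p)^(n-j))"

lemma Sb_sym: "Sb n k (1-p) = Sb n k p"
  unfolding Sb_def
  apply (rule sum.reindex_bij_witness[where i="\<lambda>j. n - j" and j="\<lambda>j. n - j"])
  apply (auto simp: binomial_symmetric[of _ n, symmetric])
  done

definition hb :: "nat \<Rightarrow> nat \<Rightarrow> real \<Rightarrow> real" where
  "hb N i p = real (N choose i) * p^i * (1-p)^(N-i)"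

lemma term_deriv:
  assumes "i < N"
  shows "((\<lambda>p. real (Suc N choose Suc i) * p^(Suc i) * (1-p)^(N - i)) has_real_derivative
           real (Suc N) * (hb N i p - hb N (Suc i) p)) (at p)"
proof -
  obtain d where d: "N = Suc i + d" using assms less_imp_Suc_add by blast
  have e1: "N - i = Suc d" "N - Suc i = d" using d by auto
  have c1: "real (Suc N choose Suc i) * real (Suc i) = real (Suc N) * real (N choose i)"
  proof -
    have "Suc N * (N choose i) = (Suc N choose Suc i) * Suc i" by (rule Suc_times_binomial_eq)
    then have "real (Suc N * (N choose i)) = real ((Suc N choose Suc i) * Suc i)" by (simp only:)
    then show ?thesis by (simp only: of_nat_mult)
  qed
  have c2: "real (Suc N choose Suc i) * real (Suc d) = real (Suc N) * real (N choose Suc i)"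
  proof -
    have "(Suc N - Suc i) * (Suc N choose Suc i) = Suc N * ((Suc N - 1) choose Suc i)" by (rule binomial_absorb_comp)
    then have "Suc d * (Suc N choose Suc i) = Suc N * (N choose Suc i)" using e1 by simp
    then have "real (Suc d * (Suc N choose Suc i)) = real (Suc N * (N choose Suc i))" by (simp only:)
    then show ?thesis by (simp only: of_nat_mult mult.commute)
  qed
  define C where "C = real (Suc N choose Suc i)"
  have D: "((\<lambda>p. C * p^(Suc i) * (1-p)^(Suc d)) has_real_derivative
          C * (real (Suc i) * p^i) * (1-p)^(Suc d) + C * p^(Suc i) * (real (Suc d) * (1-p)^d * (-1))) (at p)"
    apply (rule derivative_eq_intros refl)+
    apply simp
    done
  have E: "C * (real (Suc i) * p^i) * (1-p)^(Suc d) + C * p^(Suc i) * (real (Suc d) * (1-p)^d * (-1))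
     = (C * real (Suc i)) * (p^i * (1-p)^(Suc d)) - (C * real (Suc d)) * (p^(Suc i) * (1-p)^d)"
    by (simp only: mult_ac diff_conv_add_uminus mult_minus_right mult_1_right)
  also have "\<dots> = real (Suc N) * (hb N i p - hb N (Suc i) p)"
    unfolding C_def c1 c2 hb_def e1 by (simp only: mult_ac right_diff_distrib)
  finally have E2: "C * (real (Suc i) * p^i) * (1-p)^(Suc d) + C * p^(Suc i) * (real (Suc d) * (1-p)^d * (-1))
     = real (Suc N) * (hb N i p - hb N (Suc i) p)" .
  show ?thesis using D[unfolded E2, unfolded C_def] unfolding e1 .
qed
lemma Sb_mono:
  assumes k: "k + 1 \<le> n - k" and q: "0 \<le> q" "q \<le> p" and p: "p \<le> 1/2"
  shows "Sb n k q \<le> Sb n k p"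
proof -
  have "n = Suc (2*k + (n - Suc (2*k)))" using k by arith
  then obtain m where nm: "n = Suc (2*k + m)" by blast
  define N where "N = 2*k + m"
  have rep: "Sb n k x = (\<Sum>i=k..<k+m. real (Suc N choose Suc i) * x^(Suc i) * (1-x)^(N - i))" for x
  proof -
    have "{k<..<n-k} = {Suc k..<Suc (k+m)}" using nm by auto
    then show ?thesis unfolding Sb_def
      by (simp only: sum.shift_bounds_Suc_ivl) (simp add: nm N_def)
  qed
  have der: "((\<lambda>x. Sb n k x) has_real_derivative real (Suc N) * (hb N k x - hb N (k+m) x)) (at x)" for x
  proof -
    have "((\<lambda>x. \<Sum>i=k..<k+m. real (Suc N choose Suc i) * x^(Suc i) * (1-x)^(N - i)) has_real_derivative
        (\<Sum>i=k..<k+m. real (Suc N) * (hb N i x - hb N (Suc i) x))) (at x)"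
      by (intro DERIV_sum term_deriv) (auto simp: N_def)
    also have "(\<Sum>i=k..<k+m. real (Suc N) * (hb N i x - hb N (Suc i) x)) = real (Suc N) * (hb N k x - hb N (k+m) x)"
    proof -
      have "(\<Sum>i=k..<k+m. hb N (Suc i) x - hb N i x) = hb N (k+m) x - hb N k x" by (rule sum_Suc_diff') simp
      then have t: "(\<Sum>i=k..<k+m. hb N i x - hb N (Suc i) x) = hb N k x - hb N (k+m) x"
        by (simp add: sum_subtractf)
      show ?thesis by (simp add: sum_distrib_left[symmetric] t)
    qed
    finally show ?thesis by (simp add: rep)
  qed
  have nonneg: "real (Suc N) * (hb N k x - hb N (k+m) x) \<ge> 0" if "0 \<le> x" "x \<le> 1/2" for x
  proof -
    have "N choose (k+m) = N choose k" using binomial_symmetric[of k N] by (simp add: N_def)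
    then have "hb N k x - hb N (k+m) x = real (N choose k) * x^k * (1-x)^k * ((1-x)^m - x^m)"
      unfolding hb_def N_def by (simp add: algebra_simps power_add)
    moreover have "x^m \<le> (1-x)^m" using that by (intro power_mono) auto
    ultimately show ?thesis using that by (auto intro!: mult_nonneg_nonneg)
  qed
  show ?thesis
  proof (rule DERIV_nonneg_imp_increasing_open[OF q(2)])
    fix x assume "q < x" "x < p"
    then show "\<exists>y. ((\<lambda>x. Sb n k x) has_real_derivative y) (at x) \<and> 0 \<le> y"
      using der nonneg q p by (meson less_eq_real_def order_trans)
  next
    show "continuous_on {q..p} (Sb n k)"
      unfolding Sb_def by (intro continuous_intros)
  qed
qed

lemma PiM_bool_sets:
  assumes "finite I" "A \<subseteq> space (PiM I (\<lambda>_. count_space (UNIV::bool set)))"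
  shows "A \<in> sets (PiM I (\<lambda>_. count_space (UNIV::bool set)))"
proof -
  have sp: "space (PiM I (\<lambda>_. count_space (UNIV::bool set))) = PiE I (\<lambda>_. UNIV)"
    by (simp add: space_PiM)
  have "finite (I \<rightarrow>\<^sub>E (UNIV::bool set))" by (rule finite_PiE) (auto simp: assms(1))
  then have fin: "finite A" using assms sp by (metis finite_subset)
  have eq: "A = (\<Union>f\<in>A. PiE I (\<lambda>i. {f i}))"
  proof -
    have "PiE I (\<lambda>i. {f i}) = {f}" if "f \<in> A" for f
      using that assms(2) sp by (intro PiE_singleton) (auto simp: PiE_def)
    then show ?thesis by auto
  qed
  have "(\<Union>f\<in>A. PiE I (\<lambda>i. {f i})) \<in> sets (PiM I (\<lambda>_. count_space (UNIV::bool set)))"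
    using fin by (intro sets.finite_UN sets_PiM_I_finite assms(1)) auto
  with eq show ?thesis by simp
qed

lemma coverage_binomial:
  fixes G :: "real measure" and theta p :: real and n :: nat
  assumes G: "real_distribution G" and p: "measure G {..theta} = p" and n: "n \<ge> 1"
  shows "measure (PiM {..<n} (\<lambda>_. G)) {x \<in> space (PiM {..<n} (\<lambda>_. G)). P (card {i\<in>{..<n}. x i \<le> theta})}
       = measure_pmf.prob (binomial_pmf n p) {z. P z}"
proof -
  interpret G: real_distribution G by fact
  define I where "I = {..<n::nat}"
  have finI: "finite I" by (simp add: I_def)
  have "0 \<in> I" using n by (simp add: I_def)
  then have neI: "I \<noteq> {}" by blast
  define M where "M = PiM I (\<lambda>_. G)"
  define B where "B = PiM I (\<lambda>_. count_space (UNIV::bool set))"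
  define T where "T = (\<lambda>x::nat\<Rightarrow>real. \<lambda>i\<in>I. x i \<le> theta)"
  have p01: "p \<in> {0..1}" using p G.prob_le_1 by auto
  have pred_meas: "(\<lambda>y::real. y \<le> theta) \<in> measurable G (count_space UNIV)"
    by (simp add: measurable_cong_sets[OF G.events_eq_borel refl])
  have Tmeas: "T \<in> measurable M B"
    unfolding T_def M_def B_def
  proof (intro measurable_restrict)
    fix i assume "i \<in> I"
    then have "(\<lambda>x. x i) \<in> measurable (PiM I (\<lambda>_. G)) G" by (rule measurable_component_singleton)
    from measurable_compose[OF this pred_meas] show "(\<lambda>x. x i \<le> theta) \<in> measurable (PiM I (\<lambda>_. G)) (count_space UNIV)" .
  qed
  have d2: "distr G (count_space UNIV) (\<lambda>y. y \<le> theta) = measure_pmf (bernoulli_pmf p)"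
  proof (rule measure_eqI_countable[where A=UNIV])
    fix a :: bool
    have "emeasure (distr G (count_space UNIV) (\<lambda>y. y \<le> theta)) {a} = emeasure G ((\<lambda>y. y \<le> theta) -` {a} \<inter> space G)"
      using pred_meas by (intro emeasure_distr) auto
    also have "\<dots> = emeasure (measure_pmf (bernoulli_pmf p)) {a}"
    proof (cases a)
      case True
      then have "(\<lambda>y. y \<le> theta) -` {a} \<inter> space G = {..theta}" by auto
      then show ?thesis using True p p01 by (simp add: G.emeasure_eq_measure measure_pmf.emeasure_eq_measure measure_pmf_single)
    next
      case False
      then have "(\<lambda>y. y \<le> theta) -` {a} \<inter> space G = space G - {..theta}" by auto
      moreover have "G.prob (space G - {..theta}) = 1 - p" using G.prob_compl[of "{..theta}"] p by simp
      ultimately show ?thesis using False p p01 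
        by (simp add: G.emeasure_eq_measure measure_pmf.emeasure_eq_measure measure_pmf_single)
    qed
    finally show "emeasure (distr G (count_space UNIV) (\<lambda>y. y \<le> theta)) {a} = emeasure (measure_pmf (bernoulli_pmf p)) {a}" .
  qed auto
  define Bern where "Bern = measure_pmf (bernoulli_pmf p)"
  define B' where "B' = PiM I (\<lambda>_. Bern)"
  have sB: "sets B' = sets B" unfolding B'_def B_def Bern_def by (intro sets_PiM_cong) auto
  have Tmeas': "T \<in> measurable M B'" using Tmeas by (simp add: measurable_cong_sets[OF refl sB])
  have pred_meas': "(\<lambda>y::real. y \<le> theta) \<in> measurable G Bern"
    using pred_meas by (simp add: measurable_cong_sets[OF refl, of Bern "count_space UNIV"] Bern_def)
  have ceq: "compose I (\<lambda>y. y \<le> theta) = (\<lambda>x. \<lambda>i\<in>I. x i \<le> theta)" by (rule ext) (simp add: compose_def)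
  have d1: "distr M B' T = PiM I (\<lambda>_. distr G Bern (\<lambda>y. y \<le> theta))"
    unfolding M_def B'_def T_def
    using distr_PiM_finite_prob_space'[OF finI, of "\<lambda>_. G" "\<lambda>_. Bern" "\<lambda>y. y \<le> theta"]
      pred_meas' G.prob_space_axioms by (simp add: ceq Bern_def measure_pmf.prob_space_axioms)
  have d2': "distr G Bern (\<lambda>y. y \<le> theta) = Bern"
  proof -
    have "distr G Bern (\<lambda>y. y \<le> theta) = distr G (count_space UNIV) (\<lambda>y. y \<le> theta)"
      by (rule distr_cong) (auto simp: Bern_def)
    then show ?thesis using d2 by (simp add: Bern_def)
  qed
  define Q where "Q = Pi_pmf I False (\<lambda>_. bernoulli_pmf p)"
  have d3: "distr (measure_pmf Q) B (\<lambda>x. restrict x I) = PiM I (\<lambda>_. measure_pmf (bernoulli_pmf p))"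
  proof -
    have "prob_space.indep_vars (measure_pmf Q) (\<lambda>_. count_space UNIV) (\<lambda>x f. f x) I"
      unfolding Q_def by (rule indep_vars_Pi_pmf[OF finI])
    then have "distr (measure_pmf Q) B (\<lambda>x. restrict x I) = PiM I (\<lambda>i. distr (measure_pmf Q) (count_space UNIV) (\<lambda>f. f i))"
      unfolding B_def
      by (subst (asm) prob_space.indep_vars_iff_distr_eq_PiM'[OF measure_pmf.prob_space_axioms neI]) (auto simp: restrict_def)
    also have "\<dots> = PiM I (\<lambda>_. measure_pmf (bernoulli_pmf p))"
      by (intro PiM_cong refl) (simp add: map_pmf_rep_eq[symmetric] Q_def Pi_pmf_component[OF finI])
    finally show ?thesis .
  qed
  define E' where "E' = {f \<in> space B. P (card {i\<in>I. f i})}"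
  have E'sets: "E' \<in> sets B" unfolding B_def E'_def by (intro PiM_bool_sets finI) auto
  have "{x \<in> space M. P (card {i\<in>I. x i \<le> theta})} = T -` E' \<inter> space M"
  proof -
    have cardeq: "\<And>x. {i\<in>I. T x i} = {i\<in>I. x i \<le> theta}" by (auto simp: T_def)
    have Tsp: "\<And>x. x \<in> space M \<Longrightarrow> T x \<in> space B" using measurable_space[OF Tmeas] by blast
    show ?thesis using Tsp by (auto simp: E'_def cardeq)
  qed
  then have "measure M {x \<in> space M. P (card {i\<in>I. x i \<le> theta})} = measure (distr M B' T) E'"
    using Tmeas' E'sets sB by (simp add: measure_distr)
  also have "\<dots> = measure (distr (measure_pmf Q) B (\<lambda>x. restrict x I)) E'"
  proof -
    have "distr M B' T = B'" by (subst d1) (simp add: d2' B'_def)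
    then show ?thesis using d3 by (simp add: B'_def Bern_def)
  qed
  also have "\<dots> = measure Q ((\<lambda>x. restrict x I) -` E')"
    using E'sets by (subst measure_distr) (auto simp: B_def space_PiM)
  also have "(\<lambda>x. restrict x I) -` E' = (\<lambda>f. card {i\<in>I. f i}) -` {z. P z}"
  proof -
    have ce: "\<And>x. {i. (i \<in> I \<longrightarrow> x i) \<and> i \<in> I} = {i\<in>I. x i}" by auto
    show ?thesis by (auto simp: E'_def B_def space_PiM ce)
  qed
  also have "measure Q \<dots> = measure_pmf.prob (map_pmf (\<lambda>f. card {i\<in>I. f i}) Q) {z. P z}"
    by simp
  also have "map_pmf (\<lambda>f. card {i\<in>I. f i}) Q = binomial_pmf n p"
    unfolding Q_def using binomial_pmf_altdef'[OF finI _ p01, of n False] by (simp add: I_def)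
  finally show ?thesis by (simp add: M_def I_def)
qed

lemma sorted_nth_le_iff:
  fixes xs :: "real list"
  assumes "sorted xs" "i < length xs"
  shows "xs ! i \<le> t \<longleftrightarrow> i < length (filter (\<lambda>y. y \<le> t) xs)"
  using assms
proof (induction xs arbitrary: i)
  case Nil then show ?case by simp
next
  case (Cons a xs)
  show ?case
  proof (cases "a \<le> t")
    case True
    show ?thesis
    proof (cases i)
      case 0 then show ?thesis using True by simp
    next
      case (Suc j)
      then show ?thesis using Cons True by auto
    qed
  next
    case False
    have "\<forall>y\<in>set xs. \<not> y \<le> t" using Cons.prems(1) False by auto
    then have "filter (\<lambda>y. y \<le> t) xs = []" by (simp add: filter_empty_conv)
    moreover have "\<not> (a # xs) ! i \<le> t"
    proof (cases i)
      case 0 then show ?thesis using False by simp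
    next
      case (Suc j) then show ?thesis using Cons.prems \<open>\<forall>y\<in>set xs. \<not> y \<le> t\<close> by auto
    qed
    ultimately show ?thesis using False by simp
  qed
qed

lemma order_stat_event:
  fixes x :: "nat \<Rightarrow> real"
  assumes k: "k + 1 \<le> n - k"
  shows "(order_stat n (k+1) x \<le> t \<and> t < order_stat n (n-k) x) \<longleftrightarrow>
         (k < card {i\<in>{..<n}. x i \<le> t} \<and> card {i\<in>{..<n}. x i \<le> t} < n - k)"
proof -
  define xs where "xs = sort (map x [0..<n])"
  have s: "sorted xs" and l: "length xs = n" by (auto simp: xs_def)
  have c: "length (filter (\<lambda>y. y \<le> t) xs) = card {i\<in>{..<n}. x i \<le> t}"
  proof -
    have "length (filter (\<lambda>y. y \<le> t) xs) = length (filter (\<lambda>y. y \<le> t) (map x [0..<n]))"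
      unfolding xs_def by (metis mset_filter mset_sort size_mset)
    also have "\<dots> = card {i. i < n \<and> x i \<le> t}" unfolding length_filter_conv_card by (intro arg_cong[where f=card]) auto
    also have "\<dots> = card {i\<in>{..<n}. x i \<le> t}" by (intro arg_cong[where f=card]) auto
    finally show ?thesis .
  qed
  have "order_stat n (k+1) x = xs ! k" by (simp add: order_stat_def xs_def)
  moreover have "order_stat n (n-k) x = xs ! (n - k - 1)" by (simp add: order_stat_def xs_def)
  moreover have "xs ! k \<le> t \<longleftrightarrow> k < card {i\<in>{..<n}. x i \<le> t}"
    using sorted_nth_le_iff[OF s, of k t] k l c by simp
  moreover have "xs ! (n-k-1) \<le> t \<longleftrightarrow> n-k-1 < card {i\<in>{..<n}. x i \<le> t}"
    using sorted_nth_le_iff[OF s, of "n-k-1" t] k l c by simp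
  ultimately show ?thesis using k by auto
qed

lemma mixture_exists:
  assumes F: "real_distribution F" and H: "real_distribution H" and e: "0 \<le> e" "e \<le> 1"
  shows "\<exists>G. is_mixture e F H G"
proof -
  interpret F: real_distribution F by fact
  interpret H: real_distribution H by fact
  define mu where "mu = (\<lambda>A. ennreal (1-e) * emeasure F A + ennreal e * emeasure H A)"
  define G where "G = measure_of UNIV (sets borel) mu"
  have sa: "sigma_algebra UNIV (sets borel)"
    using sets.sigma_algebra_axioms[of borel] by simp
  have pos: "positive (sets borel) mu" by (simp add: positive_def mu_def)
  have ca: "countably_additive (sets borel) mu"
  proof (unfold countably_additive_def, intro allI impI)
    fix A :: "nat \<Rightarrow> real set"
    assume A: "range A \<subseteq> sets borel" "disjoint_family A" "\<Union> (range A) \<in> sets borel"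
    have "(\<Sum>i. mu (A i)) = (\<Sum>i. ennreal (1-e) * emeasure F (A i)) + (\<Sum>i. ennreal e * emeasure H (A i))"
      unfolding mu_def by (rule suminf_add[symmetric]) auto
    also have "\<dots> = ennreal (1-e) * (\<Sum>i. emeasure F (A i)) + ennreal e * (\<Sum>i. emeasure H (A i))"
      by simp
    also have "\<dots> = mu (\<Union> (range A))"
      unfolding mu_def using A by (simp add: suminf_emeasure)
    finally show "(\<Sum>i. mu (A i)) = mu (\<Union> (range A))" .
  qed
  have em: "emeasure G A = mu A" if "A \<in> sets borel" for A
    unfolding G_def using emeasure_measure_of_sigma[OF sa pos ca that] .
  have sG: "sets G = sets borel" unfolding G_def using sigma_algebra.sigma_sets_eq[OF sa] by (simp add: sets_measure_of_conv)
  have spG: "space G = UNIV" unfolding G_def by (simp add: space_measure_of_conv)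
  have "emeasure G (space G) = 1"
    using em[of UNIV] spG F.emeasure_space_1 H.emeasure_space_1 e
    by (simp add: mu_def ennreal_plus[symmetric] del: ennreal_plus)
  then have "prob_space G" by (rule prob_spaceI)
  then have rd: "real_distribution G" using sG by (simp add: real_distribution_def real_distribution_axioms_def)
  have "measure G A = (1 - e) * measure F A + e * measure H A" if "A \<in> sets borel" for A
  proof -
    have eG: "emeasure G A = ennreal ((1 - e) * measure F A + e * measure H A)"
      using em[OF that] e
      by (simp add: mu_def F.emeasure_eq_measure H.emeasure_eq_measure ennreal_mult[symmetric] ennreal_plus[symmetric] del: ennreal_plus)
    have nn: "0 \<le> (1 - e) * measure F A + e * measure H A" using e by simp
    have "measure G A = enn2real (emeasure G A)" by (rule measure_def)
    also have "\<dots> = (1 - e) * measure F A + e * measure H A" by (simp only: eG enn2real_ennreal[OF nn])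
    finally show ?thesis .
  qed
  then have "is_mixture e F H G" using rd by (simp add: is_mixture_def)
  then show ?thesis by blast
qed

lemma binom_prob_Sb:
  assumes "0 \<le> p" "p \<le> 1"
  shows "measure_pmf.prob (binomial_pmf n p) {z. k < z \<and> z < n - k} = Sb n k p"
proof -
  have "{z. k < z \<and> z < n - k} = {k<..<n-k}" by auto
  then show ?thesis using assms
    by (simp add: measure_measure_pmf_finite pmf_binomial Sb_def)
qed

lemma coverage_Sb:
  assumes G: "real_distribution G" and p: "measure G {..theta} = p" and n: "n \<ge> 1"
    and k: "k + 1 \<le> n - k"
  shows "coverage n k theta G = Sb n k p"
proof -
  interpret G: real_distribution G by fact
  have p01: "0 \<le> p" "p \<le> 1" using p G.prob_le_1 by auto
  have "coverage n k theta G = measure (PiM {..<n} (\<lambda>_. G)) {x \<in> space (PiM {..<n} (\<lambda>_. G)).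
           (\<lambda>c. k < c \<and> c < n - k) (card {i\<in>{..<n}. x i \<le> theta})}"
    unfolding coverage_def using order_stat_event[OF k] by simp
  also have "\<dots> = measure_pmf.prob (binomial_pmf n p) {z. k < z \<and> z < n - k}"
    by (rule coverage_binomial[OF G p n])
  also have "\<dots> = Sb n k p" by (rule binom_prob_Sb[OF p01])
  finally show ?thesis .
qed

theorem theorem1:
  fixes F :: "real measure" and theta eps :: real and n k :: nat
  assumes F_dist: "real_distribution F"
    and F_cont: "\<And>x. isCont (cdf F) x"
    and med: "cdf F theta = 1/2"
    and med_unique: "\<And>x. cdf F x = 1/2 \<Longrightarrow> x = theta"
    and eps: "0 \<le> eps" "eps < 1/2"
    and n: "n \<ge> 1"
    and k: "k + 1 \<le> n - k"
  shows "(INF G\<in>contam_nbhd eps F. coverage n k theta G) = 1 - alpha_star n k eps \<and>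
         (\<forall>H. real_distribution H \<longrightarrow> (measure H {..theta} = 1 \<or> measure H {theta<..} = 1) \<longrightarrow>
           (\<exists>G. is_mixture eps F H G) \<and>
           (\<forall>G. is_mixture eps F H G \<longrightarrow> coverage n k theta G = 1 - alpha_star n k eps))"
proof -
  interpret F: real_distribution F by fact
  define q0 where "q0 = (1 - eps) / 2"
  have alpha: "1 - alpha_star n k eps = Sb n k q0"
    unfolding alpha_star_def q0_def using eps by (simp add: binom_prob_Sb)
  have mF: "measure F {..theta} = 1/2" using med by (simp add: cdf_def)
  have pG: "measure G {..theta} = q0 + eps * measure H {..theta}" if "is_mixture eps F H G" for G H
  proof -
    have "measure G {..theta} = (1 - eps) * measure F {..theta} + eps * measure H {..theta}"
      using that unfolding is_mixture_def by simp
    then show ?thesis using mF by (simp add: q0_def)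
  qed
  have sym: "Sb n k p = Sb n k (1 - p)" for p using Sb_sym[of n k "1 - p"] by simp
  have lower: "Sb n k q0 \<le> coverage n k theta G" if Gn: "G \<in> contam_nbhd eps F" for G
  proof -
    obtain H where H: "real_distribution H" "is_mixture eps F H G"
      using Gn unfolding contam_nbhd_def by blast
    interpret H: real_distribution H by fact
    have rG: "real_distribution G" using H(2) unfolding is_mixture_def by blast
    define h where "h = measure H {..theta}"
    have h01: "0 \<le> h" "h \<le> 1" unfolding h_def using H.prob_le_1 by auto
    define p where "p = q0 + eps * h"
    have cov: "coverage n k theta G = Sb n k p"
      using coverage_Sb[OF rG _ n k] pG[OF H(2)] by (simp add: p_def h_def)
    have b1: "q0 \<le> p" unfolding p_def using eps h01 by simp
    have b2: "p \<le> 1 - q0" unfolding p_def q0_def using eps h01 mult_left_le[OF h01(2) eps(1)] by (simp add: field_simps)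
    show ?thesis
    proof (cases "p \<le> 1/2")
      case True
      then show ?thesis using Sb_mono[OF k _ b1 True] cov eps by (simp add: q0_def)
    next
      case False
      have c1: "q0 \<le> 1 - p" using b2 by linarith
      have c2: "1 - p \<le> 1/2" using False by linarith
      have c0: "0 \<le> q0" using eps by (simp add: q0_def)
      have "Sb n k q0 \<le> Sb n k (1 - p)" using Sb_mono[OF k c0 c1 c2] .
      then show ?thesis using cov sym[of p] by simp
    qed
  qed
  have partb: "(\<exists>G. is_mixture eps F H G) \<and> (\<forall>G. is_mixture eps F H G \<longrightarrow> coverage n k theta G = Sb n k q0)"
    if H: "real_distribution H" and Hm: "measure H {..theta} = 1 \<or> measure H {theta<..} = 1" for H
  proof
    show "\<exists>G. is_mixture eps F H G" using mixture_exists[OF F_dist H] eps by simp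
  next
    interpret H: real_distribution H by fact
    show "\<forall>G. is_mixture eps F H G \<longrightarrow> coverage n k theta G = Sb n k q0"
    proof (intro allI impI)
      fix G assume mix: "is_mixture eps F H G"
      have rG: "real_distribution G" using mix unfolding is_mixture_def by blast
      from Hm show "coverage n k theta G = Sb n k q0"
      proof
        assume h1: "measure H {..theta} = 1"
        have "coverage n k theta G = Sb n k (q0 + eps)" using coverage_Sb[OF rG _ n k] pG[OF mix] h1 by simp
        also have "\<dots> = Sb n k q0" using sym[of "q0 + eps"] by (simp add: q0_def field_simps)
        finally show ?thesis .
      next
        assume h2: "measure H {theta<..} = 1"
        have "UNIV - {theta<..} = {..theta}" by auto
        then have "measure H {..theta} = 0" using H.prob_compl[of "{theta<..}"] h2 by simp
        then show ?thesis using coverage_Sb[OF rG _ n k] pG[OF mix] by simp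
      qed
    qed
  qed
  define H0 where "H0 = return borel theta"
  have H0: "real_distribution H0" unfolding H0_def
    by (simp add: real_distribution_def real_distribution_axioms_def prob_space_return)
  have H0m: "measure H0 {..theta} = 1" unfolding H0_def by (simp add: measure_return)
  obtain G0 where G0: "is_mixture eps F H0 G0" using partb[OF H0] H0m by blast
  have G0n: "G0 \<in> contam_nbhd eps F" using G0 H0 unfolding contam_nbhd_def by blast
  have G0c: "coverage n k theta G0 = Sb n k q0" using partb[OF H0] H0m G0 by blast
  have Fn: "F \<in> contam_nbhd eps F"
    unfolding contam_nbhd_def is_mixture_def using F_dist by (auto simp: algebra_simps)
  have "(INF G\<in>contam_nbhd eps F. coverage n k theta G) = Sb n k q0"
  proof (rule antisym)
    have "(INF G\<in>contam_nbhd eps F. coverage n k theta G) \<le> coverage n k theta G0"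
      by (rule cINF_lower[OF bdd_belowI2[OF lower] G0n])
    then show "(INF G\<in>contam_nbhd eps F. coverage n k theta G) \<le> Sb n k q0" using G0c by simp
  next
    show "Sb n k q0 \<le> (INF G\<in>contam_nbhd eps F. coverage n k theta G)"
      using Fn by (intro cINF_greatest lower) auto
  qed
  then show ?thesis using partb alpha by simp
qed

end
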